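(* Assume the Setting (S). For every $n\ge0$, pointwise in $z$, $$\Omega_n=2\,(h_{n+1}-h_n),\qquad \operatorname{Tr} g_n=2\,(h_{n+1}+h_n).$$ In particular $\Omega_0=\operatorname{Tr}g_0=2h_1>0$.
   Context: Setting (S). Let $\mathcal H$ be a separable complex Hilbert space with inner product $\langle\cdot|\cdot\rangle$, antilinear in the first slot. Let $\Lambda\subset\mathbb C$ be a lattice with fundamental domain $D$. Write $z=x+iy$, $\partial=\tfrac12(\partial_x-i\partial_y)$, $\bar\partial=\tfrac12(\partial_x+i\partial_y)$. Let $f:\mathbb C\to\mathcal H$ be holomorphic and satisfy: (i) for every $z\in\mathbb C$ and every $n\ge0$ the vectors $f(z),\partial f(z),\dots,\partial^n f(z)$ are linearly independent; (ii) for every $\lambda\in\Lambda$ there are a nowhere-vanishing holomorphic function $c_\lambda:\mathbb C\to\mathbb C$ and a unitary operator $V_\lambda$ on $\mathcal H$ independent of $z$ such that $f(z+\lambda)=c_\lambda(z)V_\lambda f(z)$ for all $z$. For $n\ge0$ let $P_n(z)$ be the orthogonal projector onto $\mathrm{span}\{f(z),\partial f(z),\dots,\partial^{n-1}f(z)\}$ (with $P_0=0$), let $r_n=\|(1-P_n)\partial^n f\|>0$ and define the "generalized Landau levels" $u_n=(1-P_n)\partial^n f/r_n$. For a smooth unit-vector-valued map $u$ of $(x,y)$ define $\chi_{ab}=\langle\partial_a u|(1-|u\rangle\langle u|)|\partial_b u\rangle$ for $a,b\in\{x,y\}$, $g_{ab}=\operatorname{Re}\chi_{ab}$, $\operatorname{Tr}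 g=g_{xx}+g_{yy}$, and $\Omega=2\operatorname{Im}\chi_{xy}$; write $g_n,\Omega_n$ for these computed from $u=u_n$. Define $h_N=|\langle u_N|\partial u_{N-1}\rangle|^2$ for $N\ge1$ and $h_0=0$. *)

theory Defs
  imports "HOL-Analysis.Analysis"
begin

class complex_vector = real_vector +
  fixes scaleC :: "complex \<Rightarrow> 'a \<Rightarrow> 'a" (infixr \<open>*\<^sub>C\<close> 75)
  assumes scaleC_add_right: "a *\<^sub>C (x + y) = a *\<^sub>C x + a *\<^sub>C y"
    and scaleC_add_left: "(a + b) *\<^sub>C x = a *\<^sub>C x + b *\<^sub>C x"
    and scaleC_scaleC: "a *\<^sub>C (b *\<^sub>C x) = (a * b) *\<^sub>C x"
    and scaleC_one: "1 *\<^sub>C x = x"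
    and scaleR_scaleC: "scaleR r x = complex_of_real r *\<^sub>C x"

text \<open>Inner product, antilinear in the first slot.\<close>
class complex_inner = complex_vector + real_normed_vector + dist_norm + sgn_div_norm
    + uniformity_dist + open_uniformity +
  fixes cinner :: "'a \<Rightarrow> 'a \<Rightarrow> complex"
  assumes cinner_conj_sym: "cinner x y = cnj (cinner y x)"
    and cinner_add_right: "cinner x (y + z) = cinner x y + cinner x z"
    and cinner_scaleC_right: "cinner x (c *\<^sub>C y) = c * cinner x y"
    and cinner_nonneg: "0 \<le> Re (cinner x x)"
    and cinner_eq_zero_iff: "cinner x x = 0 \<longleftrightarrow> x = 0"
    and norm_eq_sqrt_cinner: "norm x = sqrt (Re (cinner x x))"

instantiation complex :: complex_inner
begin
definition scaleC_complex :: "complex \<Rightarrow> complex \<Rightarrow> complex" where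
  "scaleC_complex a x = a * x"
definition cinner_complex :: "complex \<Rightarrow> complex \<Rightarrow> complex" where
  "cinner_complex x y = cnj x * y"
instance
proof
  fix x y z :: complex and a b :: complex and r :: real
  show "a *\<^sub>C (x + y) = a *\<^sub>C x + a *\<^sub>C y" by (simp add: scaleC_complex_def algebra_simps)
  show "(a + b) *\<^sub>C x = a *\<^sub>C x + b *\<^sub>C x" by (simp add: scaleC_complex_def algebra_simps)
  show "a *\<^sub>C (b *\<^sub>C x) = (a * b) *\<^sub>C x" by (simp add: scaleC_complex_def)
  show "1 *\<^sub>C x = x" by (simp add: scaleC_complex_def)
  show "scaleR r x = complex_of_real r *\<^sub>C x" by (simp add: scaleC_complex_def scaleR_conv_of_real)
  show "cinner x y = cnj (cinner y x)" by (simp add: cinner_complex_def)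
  show "cinner x (y + z) = cinner x y + cinner x z" by (simp add: cinner_complex_def algebra_simps)
  show "cinner x (a *\<^sub>C y) = a * cinner x y" by (simp add: cinner_complex_def scaleC_complex_def)
  show "0 \<le> Re (cinner x x)" by (simp add: cinner_complex_def)
  show "cinner x x = 0 \<longleftrightarrow> x = 0" by (simp add: cinner_complex_def)
  show "norm x = sqrt (Re (cinner x x))"
    by (simp add: cinner_complex_def complex_mult_cnj cmod_def power2_eq_square)
qed
end

definition is_lattice :: "complex set \<Rightarrow> bool" where
  "is_lattice L \<longleftrightarrow> (\<exists>w1 w2. Im (cnj w1 * w2) \<noteq> 0 \<and>
      L = {of_int m * w1 + of_int n * w2 | m n. True})"

definition hol :: "(complex \<Rightarrow> 'H::complex_inner) \<Rightarrow> bool" where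
  "hol f \<longleftrightarrow> (\<forall>z. \<exists>d. (f has_derivative (\<lambda>h. h *\<^sub>C d)) (at z))"

definition unitary_op :: "('H::complex_inner \<Rightarrow> 'H) \<Rightarrow> bool" where
  "unitary_op V \<longleftrightarrow> (\<forall>x y. V (x + y) = V x + V y) \<and> (\<forall>c x. V (c *\<^sub>C x) = c *\<^sub>C V x)
     \<and> (\<forall>x y. cinner (V x) (V y) = cinner x y) \<and> surj V"

definition dX :: "(complex \<Rightarrow> 'H::complex_inner) \<Rightarrow> complex \<Rightarrow> 'H" where
  "dX u z = vector_derivative (\<lambda>t::real. u (z + complex_of_real t)) (at 0)"
definition dY :: "(complex \<Rightarrow> 'H::complex_inner) \<Rightarrow> complex \<Rightarrow> 'H" where
  "dY u z = vector_derivative (\<lambda>t::real. u (z + \<i> * complex_of_real t)) (at 0)"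
definition Dz :: "(complex \<Rightarrow> 'H::complex_inner) \<Rightarrow> complex \<Rightarrow> 'H" where
  "Dz u z = (1/2) *\<^sub>C (dX u z - \<i> *\<^sub>C dY u z)"

primrec dpow :: "(complex \<Rightarrow> 'H::complex_inner) \<Rightarrow> nat \<Rightarrow> complex \<Rightarrow> 'H" where
  "dpow f 0 = f"
| "dpow f (Suc n) = Dz (dpow f n)"

definition lin_indep_upto :: "(nat \<Rightarrow> 'H::complex_inner) \<Rightarrow> nat \<Rightarrow> bool" where
  "lin_indep_upto v n \<longleftrightarrow>
     (\<forall>c. (\<Sum>k\<le>n. c k *\<^sub>C v k) = 0 \<longrightarrow> (\<forall>k\<le>n. c k = 0))"

definition Pn :: "(complex \<Rightarrow> 'H::complex_inner) \<Rightarrow> nat \<Rightarrow> complex \<Rightarrow> 'H \<Rightarrow> 'H" where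
  "Pn f n z v = (THE p. (\<exists>c. p = (\<Sum>k<n. c k *\<^sub>C dpow f k z)) \<and>
                        (\<forall>k<n. cinner (dpow f k z) (v - p) = 0))"

definition LL :: "(complex \<Rightarrow> 'H::complex_inner) \<Rightarrow> nat \<Rightarrow> complex \<Rightarrow> 'H" where
  "LL f n z = (let w = dpow f n z - Pn f n z (dpow f n z)
               in complex_of_real (1 / norm w) *\<^sub>C w)"

definition chi :: "((complex \<Rightarrow> 'H) \<Rightarrow> complex \<Rightarrow> 'H) \<Rightarrow> ((complex \<Rightarrow> 'H) \<Rightarrow> complex \<Rightarrow> 'H)
    \<Rightarrow> (complex \<Rightarrow> 'H::complex_inner) \<Rightarrow> complex \<Rightarrow> complex" where
  "chi da db u z = cinner (da u z) (db u z - cinner (u z) (db u z) *\<^sub>C u z)"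

definition trg :: "(complex \<Rightarrow> 'H::complex_inner) \<Rightarrow> complex \<Rightarrow> real" where
  "trg u z = Re (chi dX dX u z) + Re (chi dY dY u z)"

definition Omega :: "(complex \<Rightarrow> 'H::complex_inner) \<Rightarrow> complex \<Rightarrow> real" where
  "Omega u z = 2 * Im (chi dX dY u z)"

definition hN :: "(complex \<Rightarrow> 'H::complex_inner) \<Rightarrow> nat \<Rightarrow> complex \<Rightarrow> real" where
  "hN f N z = (if N = 0 then 0 else (cmod (cinner (LL f N z) (Dz (LL f (N - 1)) z)))\<^sup>2)"

end

theory Submission
  imports Defs "HOL-Complex_Analysis.Complex_Analysis"
begin



lemma scaleC_zero_right[simp]: "a *\<^sub>C (0::'H::complex_vector) = 0"
proof -
  have "a *\<^sub>C 0 + a *\<^sub>C 0 = a *\<^sub>C (0::'H) + 0" by (simp only: scaleC_add_right[symmetric] add_0_right)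
  then show ?thesis by (simp only: add_left_cancel)
qed
lemma scaleC_zero_left[simp]: "0 *\<^sub>C (x::'H::complex_vector) = 0"
proof -
  have "0 *\<^sub>C x + 0 *\<^sub>C x = 0 *\<^sub>C x + (0::'H)" by (simp only: scaleC_add_left[symmetric] add_0_right)
  then show ?thesis by (simp only: add_left_cancel)
qed
lemma scaleC_minus_left: "(- a) *\<^sub>C (x::'H::complex_vector) = - (a *\<^sub>C x)"
proof -
  have "(- a) *\<^sub>C x + a *\<^sub>C x = 0" by (simp only: scaleC_add_left[symmetric] add.left_inverse scaleC_zero_left)
  then show ?thesis by (simp only: eq_neg_iff_add_eq_0)
qed
lemma scaleC_minus_right: "a *\<^sub>C (- x::'H::complex_vector) = - (a *\<^sub>C x)"
proof -
  have "a *\<^sub>C (- x) + a *\<^sub>C x = 0" by (simp only: scaleC_add_right[symmetric] add.left_inverse scaleC_zero_right)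
  then show ?thesis by (simp only: eq_neg_iff_add_eq_0)
qed
lemma scaleC_diff_right: "a *\<^sub>C (x - y::'H::complex_vector) = a *\<^sub>C x - a *\<^sub>C y"
  by (simp only: diff_conv_add_uminus scaleC_add_right scaleC_minus_right)
lemma scaleC_diff_left: "(a - b) *\<^sub>C (x::'H::complex_vector) = a *\<^sub>C x - b *\<^sub>C x"
  by (simp only: diff_conv_add_uminus scaleC_add_left scaleC_minus_left)
lemma scaleC_sum_right: "a *\<^sub>C (\<Sum>k\<in>A. x k) = (\<Sum>k\<in>A. a *\<^sub>C (x k::'H::complex_vector))"
  by (induction A rule: infinite_finite_induct) (auto simp: scaleC_add_right)
lemma scaleC_sum_left: "(\<Sum>k\<in>A. a k) *\<^sub>C (x::'H::complex_vector) = (\<Sum>k\<in>A. a k *\<^sub>C x)"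
  by (induction A rule: infinite_finite_induct) (auto simp: scaleC_add_left)

lemma cinner_add_left: "cinner (x + y) (z::'H::complex_inner) = cinner x z + cinner y z"
  by (subst (1 2 3) cinner_conj_sym) (simp only: cinner_add_right complex_cnj_add)
lemma cinner_scaleC_left: "cinner (c *\<^sub>C x) (y::'H::complex_inner) = cnj c * cinner x y"
  by (subst (1 2) cinner_conj_sym) (simp only: cinner_scaleC_right complex_cnj_mult complex_cnj_cnj)
lemma cinner_zero_right[simp]: "cinner x (0::'H::complex_inner) = 0"
  using cinner_scaleC_right[of x 0 x] by (simp only: scaleC_zero_left mult_zero_left)
lemma cinner_zero_left[simp]: "cinner (0::'H::complex_inner) x = 0"
  by (subst cinner_conj_sym) (simp only: cinner_zero_right complex_cnj_zero)
lemma cinner_minus_right: "cinner x (- y::'H::complex_inner) = - cinner x y"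
  using cinner_scaleC_right[of x "-1" y] by (simp add: scaleC_minus_left scaleC_one)
lemma cinner_minus_left: "cinner (- x) (y::'H::complex_inner) = - cinner x y"
  using cinner_scaleC_left[of "-1" x y] by (simp add: scaleC_minus_left scaleC_one)
lemma cinner_diff_right: "cinner x (y - z::'H::complex_inner) = cinner x y - cinner x z"
  by (simp only: diff_conv_add_uminus cinner_add_right cinner_minus_right)
lemma cinner_diff_left: "cinner (x - y) (z::'H::complex_inner) = cinner x z - cinner y z"
  by (simp only: diff_conv_add_uminus cinner_add_left cinner_minus_left)
lemma cinner_sum_right: "cinner x (\<Sum>k\<in>A. y k) = (\<Sum>k\<in>A. cinner x (y k::'H::complex_inner))"
  by (induction A rule: infinite_finite_induct) (auto simp: cinner_add_right)
lemma cinner_sum_left: "cinner (\<Sum>k\<in>A. y k) x = (\<Sum>k\<in>A. cinner (y k::'H::complex_inner) x)"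
  by (induction A rule: infinite_finite_induct) (auto simp: cinner_add_left)

lemmas cinner_simps = cinner_add_left cinner_add_right cinner_diff_left cinner_diff_right
  cinner_minus_left cinner_minus_right cinner_scaleC_left cinner_scaleC_right

lemma cinner_self_Im: "Im (cinner x (x::'H::complex_inner)) = 0"
proof -
  have "cinner x x = cnj (cinner x x)" by (rule cinner_conj_sym)
  then have "Im (cinner x x) = - Im (cinner x x)" by (metis cnj.sel(2))
  then show ?thesis by linarith
qed

lemma cinner_self: "cinner x (x::'H::complex_inner) = complex_of_real ((norm x)^2)"
proof -
  have "(norm x)^2 = Re (cinner x x)"
    using cinner_nonneg[of x] by (simp only: norm_eq_sqrt_cinner real_sqrt_pow2)
  then show ?thesis using cinner_self_Im[of x] by (simp add: complex_eq_iff)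
qed

lemma norm_scaleC: "norm (c *\<^sub>C (x::'H::complex_inner)) = cmod c * norm x"
proof -
  have "complex_of_real ((norm (c *\<^sub>C x))^2) = cinner (c *\<^sub>C x) (c *\<^sub>C x)"
    by (simp only: cinner_self)
  also have "\<dots> = (cnj c * c) * cinner x x" by (simp only: cinner_scaleC_left cinner_scaleC_right mult.assoc mult.left_commute)
  also have "\<dots> = complex_of_real ((cmod c * norm x)^2)"
  proof -
    have "cnj c * c = complex_of_real ((cmod c)^2)"
      by (metis complex_norm_square mult.commute of_real_power)
    then show ?thesis by (simp only: cinner_self power_mult_distrib of_real_mult)
  qed
  finally have "(norm (c *\<^sub>C x))^2 = (cmod c * norm x)^2" by (simp only: of_real_eq_iff)
  then show ?thesis by (simp add: power2_eq_iff_nonneg)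
qed

lemma cauchy_schwarz_c: "cmod (cinner x (y::'H::complex_inner)) \<le> norm x * norm y"
proof (cases "y = 0")
  case True then show ?thesis by simp
next
  case False
  define a where "a = cinner y x"
  define N where "N = (norm y)^2"
  define t where "t = a / complex_of_real N"
  have yy: "cinner y y = complex_of_real N" unfolding N_def by (rule cinner_self)
  have ny: "norm y > 0" using False by simp
  have N0: "N > 0" using ny by (simp add: N_def)
  have xy: "cinner x y = cnj a" unfolding a_def by (rule cinner_conj_sym)
  have "0 \<le> Re (cinner (x - t *\<^sub>C y) (x - t *\<^sub>C y))" by (rule cinner_nonneg)
  also have "cinner (x - t *\<^sub>C y) (x - t *\<^sub>C y) = cinner x x - t * cinner x y - cnj t * cinner y x + cnj t * t * cinner y y"
    by (simp only: cinner_diff_left cinner_diff_right cinner_scaleC_left cinner_scaleC_right) (simp add: algebra_simps)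
  also have "\<dots> = cinner x x - complex_of_real ((cmod a)^2 / N)"
    using N0 complex_norm_square[of a] by (simp add: t_def yy xy a_def[symmetric] field_simps)
  finally have "0 \<le> (norm x)^2 - (cmod a)^2 / N"
    by (simp add: cinner_self)
  then have "(cmod a)^2 \<le> (norm x)^2 * N"
    using N0 by (simp add: field_simps)
  then have "(cmod (cinner x y))^2 \<le> (norm x * norm y)^2"
    by (simp add: xy N_def power_mult_distrib)
  then show ?thesis by (simp add: abs_le_square_iff)
qed

lemma scaleR_complex_C: "r *\<^sub>R (c::complex) = complex_of_real r * c"
  by (rule scaleR_conv_of_real)

lemma bb_cinner: "bounded_bilinear (cinner :: 'H::complex_inner \<Rightarrow> 'H \<Rightarrow> complex)"
proof
  fix a a' b b' :: 'H and r :: real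
  show "cinner (a + a') b = cinner a b + cinner a' b" by (rule cinner_add_left)
  show "cinner a (b + b') = cinner a b + cinner a b'" by (rule cinner_add_right)
  show "cinner (r *\<^sub>R a) b = r *\<^sub>R cinner a b"
    by (simp only: scaleR_scaleC[of r a] cinner_scaleC_left scaleR_complex_C complex_cnj_complex_of_real)
  show "cinner a (r *\<^sub>R b) = r *\<^sub>R cinner a b"
    by (simp only: scaleR_scaleC[of r b] cinner_scaleC_right scaleR_complex_C)
  show "\<exists>K. \<forall>a b. norm (cinner a (b::'H)) \<le> norm a * norm b * K"
    by (rule exI[of _ 1]) (simp add: cauchy_schwarz_c)
qed

lemma bb_scaleC: "bounded_bilinear (scaleC :: complex \<Rightarrow> 'H::complex_inner \<Rightarrow> 'H)"
proof
  fix a a' :: complex and b b' :: 'H and r :: real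
  show "(a + a') *\<^sub>C b = a *\<^sub>C b + a' *\<^sub>C b" by (rule scaleC_add_left)
  show "a *\<^sub>C (b + b') = a *\<^sub>C b + a *\<^sub>C b'" by (rule scaleC_add_right)
  show "(r *\<^sub>R a) *\<^sub>C b = r *\<^sub>R (a *\<^sub>C b)"
    by (simp only: scaleR_scaleC[of r "a *\<^sub>C b"] scaleC_scaleC scaleR_complex_C)
  show "a *\<^sub>C (r *\<^sub>R b) = r *\<^sub>R (a *\<^sub>C b)"
    by (simp only: scaleR_scaleC[of r "a *\<^sub>C b"] scaleR_scaleC[of r b] scaleC_scaleC mult.commute)
  show "\<exists>K. \<forall>a b. norm (a *\<^sub>C (b::'H)) \<le> norm a * norm b * K"
    by (rule exI[of _ 1]) (simp add: norm_scaleC)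
qed

lemma hd_dXY:
  assumes "(u has_derivative D) (at z)"
  shows "dX u z = D 1" "dY u z = D \<i>"
proof -
  have bl: "bounded_linear D" using assms has_derivative_bounded_linear by blast
  have a: "((\<lambda>t::real. z + t *\<^sub>R c) has_derivative (\<lambda>t. 0 + t *\<^sub>R c)) (at 0)" for c
    by (intro has_derivative_add has_derivative_const bounded_linear_imp_has_derivative bounded_linear_scaleR_left)
  have h: "((\<lambda>t::real. u (z + t *\<^sub>R c)) has_vector_derivative D c) (at 0)" for c
  proof -
    have "((u \<circ> (\<lambda>t::real. z + t *\<^sub>R c)) has_derivative (D \<circ> (\<lambda>t. 0 + t *\<^sub>R c))) (at 0)"
      by (rule diff_chain_at[OF a]) (simp only: scaleR_zero_left add_0_right assms)
    moreover have "(D \<circ> (\<lambda>t. 0 + t *\<^sub>R c)) = (\<lambda>t. t *\<^sub>R D c)"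
      using linear_scale[OF bounded_linear.linear[OF bl]] by (simp only: o_def add_0_left)
    ultimately show ?thesis by (simp only: has_vector_derivative_def o_def)
  qed
  have e1: "(\<lambda>t::real. u (z + t *\<^sub>R 1)) = (\<lambda>t. u (z + complex_of_real t))"
    by (simp only: scaleR_conv_of_real mult_1_right)
  have e2: "(\<lambda>t::real. u (z + t *\<^sub>R \<i>)) = (\<lambda>t. u (z + \<i> * complex_of_real t))"
    by (simp only: scaleR_conv_of_real mult.commute)
  show "dX u z = D 1" unfolding dX_def using h[of 1] e1 vector_derivative_at by metis
  show "dY u z = D \<i>" unfolding dY_def using h[of \<i>] e2 vector_derivative_at by metis
qed

lemma Dz_hol:
  assumes "(u has_derivative (\<lambda>h. h *\<^sub>C d)) (at z)"
  shows "Dz u z = d"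
proof -
  have "\<i> *\<^sub>C (\<i> *\<^sub>C d) = - d" by (simp only: scaleC_scaleC) (simp add: scaleC_minus_left scaleC_one)
  then have "dX u z - \<i> *\<^sub>C dY u z = d + d"
    using hd_dXY[OF assms] by (simp only: scaleC_one diff_minus_eq_add)
  also have "d + d = 2 *\<^sub>C d"
  proof -
    have "(1 + 1) *\<^sub>C d = d + d" by (simp only: scaleC_add_left scaleC_one)
    then show ?thesis by (simp only: one_add_one)
  qed
  finally have "(1/2) *\<^sub>C (dX u z - \<i> *\<^sub>C dY u z) = ((1/2) * 2) *\<^sub>C d" by (simp only: scaleC_scaleC)
  then show ?thesis by (simp add: Dz_def scaleC_one)
qed




lemma scalar_deriv:
  assumes "(g has_derivative (\<lambda>h. h *\<^sub>C d)) (at w)"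
  shows "((\<lambda>w. cinner v (g w)) has_field_derivative cinner v d) (at w)"
proof -
  have "((\<lambda>w. cinner v (g w)) has_derivative (\<lambda>h. cinner v (h *\<^sub>C d) + cinner 0 (g w))) (at w)"
    by (rule bounded_bilinear.FDERIV[OF bb_cinner has_derivative_const assms])
  moreover have "(\<lambda>h. cinner v (h *\<^sub>C d) + cinner 0 (g w)) = (*) (cinner v d)"
    by (simp add: fun_eq_iff cinner_scaleC_right mult.commute)
  ultimately show ?thesis by (simp only: has_field_derivative_def)
qed

lemma holo_deriv:
  fixes g g' :: "complex \<Rightarrow> 'H::{complex_inner,complete_space}"
  assumes hd: "\<And>z. (g has_derivative (\<lambda>h. h *\<^sub>C g' z)) (at z)"
  shows "\<exists>L. (g' has_derivative (\<lambda>h. h *\<^sub>C L)) (at z0)"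
proof -
  have contg: "continuous_on UNIV g"
    using hd has_derivative_continuous continuous_at_imp_continuous_on by blast
  have "bounded (g ` cball z0 2)"
    by (rule compact_imp_bounded, rule compact_continuous_image)
       (auto intro: continuous_on_subset[OF contg])
  then obtain M where M0: "M > 0" and M: "\<And>y. y \<in> cball z0 2 \<Longrightarrow> norm (g y) \<le> M"
    unfolding bounded_pos by auto
  define B where "B = 6 * (M + 1)"
  have B0: "B \<ge> 0" using M0 by (simp add: B_def)
  define Q where "Q h = (1/h) *\<^sub>C (g' (z0 + h) - g' z0)" for h
  have scal: "cmod (cinner v (Q h) - cinner v (Q k)) \<le> B * (cmod h + cmod k)"
    if v: "norm v \<le> 1" and h: "0 < cmod h" "cmod h < 1" and k: "0 < cmod k" "cmod k < 1" for v h k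
  proof -
    define \<phi> where "\<phi> w = cinner v (g w)" for w
    have d\<phi>: "(\<phi> has_field_derivative cinner v (g' w)) (at w)" for w
      unfolding \<phi>_def by (rule scalar_deriv[OF hd])
    have hol\<phi>: "\<phi> holomorphic_on UNIV"
      using d\<phi> holomorphic_on_def field_differentiable_def
      by (metis field_differentiable_at_within)
    have deriv\<phi>: "deriv \<phi> = (\<lambda>w. cinner v (g' w))"
      using d\<phi> DERIV_imp_deriv by blast
    define \<phi>1 where "\<phi>1 = deriv \<phi>"
    define \<phi>2 where "\<phi>2 = deriv \<phi>1"
    define \<phi>3 where "\<phi>3 = deriv \<phi>2"
    have hol1: "\<phi>1 holomorphic_on UNIV" unfolding \<phi>1_def by (rule holomorphic_deriv[OF hol\<phi>]) simp
    have hol2: "\<phi>2 holomorphic_on UNIV" unfolding \<phi>2_def by (rule holomorphic_deriv[OF hol1]) simp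
    have d1: "(\<phi>1 has_field_derivative \<phi>2 w) (at w within S)" for w S
      unfolding \<phi>2_def by (rule holomorphic_derivI[OF hol1]) auto
    have d2: "(\<phi>2 has_field_derivative \<phi>3 w) (at w within S)" for w S
      unfolding \<phi>3_def by (rule holomorphic_derivI[OF hol2]) auto
    have b3: "cmod (\<phi>3 w) \<le> B" if "w \<in> ball z0 1" for w
    proof -
      have "cmod ((deriv ^^ 3) \<phi> w) \<le> fact 3 * (M + 1) / 1 ^ 3"
      proof (rule Cauchy_higher_deriv_bound)
        show "\<phi> holomorphic_on ball w 1" using hol\<phi> by (rule holomorphic_on_subset) auto
        show "continuous_on (cball w 1) \<phi>"
          using holomorphic_on_imp_continuous_on[OF hol\<phi>] continuous_on_subset by blast
        fix y assume y: "y \<in> ball w 1"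
        have "y \<in> cball z0 2" using y that
          using dist_triangle[of y z0 w] dist_commute[of y w] dist_commute[of z0 w] dist_commute[of z0 y] by auto
        have "cmod (\<phi> y) \<le> norm v * norm (g y)" unfolding \<phi>_def by (rule cauchy_schwarz_c)
        also have "\<dots> \<le> 1 * M" by (rule mult_mono) (use v M[OF \<open>y \<in> cball z0 2\<close>] M0 in auto)
        finally have "cmod (\<phi> y) \<le> M" by simp
        then show "\<phi> y \<in> ball 0 (M + 1)" by (simp add: dist_norm)
      qed auto
      moreover have "(deriv ^^ 3) \<phi> = \<phi>3" by (simp add: \<phi>3_def \<phi>2_def \<phi>1_def numeral_3_eq_3)
      moreover have "(fact 3 :: real) = 6" by (simp add: numeral_3_eq_3)
      ultimately show ?thesis by (simp add: B_def)
    qed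
    have b2: "cmod (\<phi>2 w - \<phi>2 z0) \<le> B * cmod (w - z0)" if "w \<in> ball z0 1" for w
      by (rule field_differentiable_bound[where S="ball z0 1" and f'=\<phi>3])
         (use that d2 b3 in auto)
    have bF: "cmod (\<phi>1 (z0 + h) - \<phi>1 z0 - h * \<phi>2 z0) \<le> B * cmod h * cmod h"
      if "cmod h < 1" for h
    proof -
      define F where "F w = \<phi>1 w - \<phi>1 z0 - (w - z0) * \<phi>2 z0" for w
      have "cmod (F (z0 + h) - F z0) \<le> (B * cmod h) * cmod (z0 + h - z0)"
      proof (rule field_differentiable_bound[where S="cball z0 (cmod h)" and f'="\<lambda>w. \<phi>2 w - \<phi>2 z0"])
        fix w assume w: "w \<in> cball z0 (cmod h)"
        show "(F has_field_derivative \<phi>2 w - \<phi>2 z0) (at w within cball z0 (cmod h))"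
          unfolding F_def by (auto intro!: derivative_eq_intros d1)
        have "w \<in> ball z0 1" using w that by auto
        then have "cmod (\<phi>2 w - \<phi>2 z0) \<le> B * cmod (w - z0)" by (rule b2)
        also have "\<dots> \<le> B * cmod h" using w B0 by (intro mult_left_mono) (auto simp: dist_norm norm_minus_commute)
        finally show "cmod (\<phi>2 w - \<phi>2 z0) \<le> B * cmod h" .
      qed (auto simp: dist_norm)
      then show ?thesis by (simp add: F_def)
    qed
    have qh: "cmod (cinner v (Q h) - \<phi>2 z0) \<le> B * cmod h" if "0 < cmod h" "cmod h < 1" for h
    proof -
      have "cinner v (Q h) - \<phi>2 z0 = (\<phi>1 (z0 + h) - \<phi>1 z0 - h * \<phi>2 z0) / h"
        using that by (simp add: Q_def cinner_simps \<phi>1_def deriv\<phi> field_simps)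
      then have "cmod (cinner v (Q h) - \<phi>2 z0) = cmod (\<phi>1 (z0 + h) - \<phi>1 z0 - h * \<phi>2 z0) / cmod h"
        by (simp add: norm_divide)
      also have "\<dots> \<le> B * cmod h * cmod h / cmod h"
        using bF[OF that(2)] that(1) by (simp add: pos_divide_le_eq)
      finally show ?thesis using that by simp
    qed
    have "cinner v (Q h) - cinner v (Q k) = (cinner v (Q h) - \<phi>2 z0) - (cinner v (Q k) - \<phi>2 z0)" by simp
    then have "cmod (cinner v (Q h) - cinner v (Q k)) \<le> cmod (cinner v (Q h) - \<phi>2 z0) + cmod (cinner v (Q k) - \<phi>2 z0)"
      by (metis norm_triangle_ineq4)
    also have "\<dots> \<le> B * cmod h + B * cmod k" using qh h k by (intro add_mono) auto
    finally show ?thesis by (simp add: distrib_left)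
  qed
  have nQ: "norm (Q h - Q k) \<le> B * (cmod h + cmod k)"
    if h: "0 < cmod h" "cmod h < 1" and k: "0 < cmod k" "cmod k < 1" for h k
  proof (cases "Q h - Q k = 0")
    case True then show ?thesis using B0 by simp
  next
    case False
    define d where "d = Q h - Q k"
    define v where "v = complex_of_real (1 / norm d) *\<^sub>C d"
    have nd: "norm d > 0" using False d_def by simp
    have "norm v = 1" using nd by (simp add: v_def norm_scaleC norm_divide)
    have "cinner v (Q h) - cinner v (Q k) = cinner v d" by (simp add: d_def cinner_simps)
    also have "\<dots> = complex_of_real (norm d)"
      using nd by (simp add: v_def cinner_simps cinner_self power2_eq_square)
    finally have "norm d = cmod (cinner v (Q h) - cinner v (Q k))" by simp
    also have "\<dots> \<le> B * (cmod h + cmod k)" using scal[OF _ h k] \<open>norm v = 1\<close> by simp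
    finally show ?thesis by (simp add: d_def)
  qed
  define s where "s n = Q (1 / of_nat (Suc (Suc n)))" for n
  have se: "cmod (1 / complex_of_nat (Suc (Suc n))) = 1 / real (Suc (Suc n))" for n
    by (simp only: norm_divide norm_one norm_of_nat)
  have sh: "0 < cmod (1 / complex_of_nat (Suc (Suc n)))" "cmod (1 / complex_of_nat (Suc (Suc n))) < 1" for n
    unfolding se by auto
  have sle: "cmod (1 / complex_of_nat (Suc (Suc p))) \<le> 1 / real (Suc N)" if "N \<le> p" for p N
    unfolding se using that by (intro frac_le) auto
  have "Cauchy s"
  proof (rule CauchyI)
    fix e :: real assume e: "0 < e"
    obtain N where N0: "2 * B / e < real N" using reals_Archimedean2 by blast
    then have N: "2 * B / e < real (Suc N)" by simp
    show "\<exists>M. \<forall>m\<ge>M. \<forall>n\<ge>M. norm (s m - s n) < e"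
    proof (intro exI allI impI)
      fix m n assume m: "N \<le> m" and n: "N \<le> n"
      have "norm (s m - s n) \<le> B * (cmod (1 / complex_of_nat (Suc (Suc m))) + cmod (1 / complex_of_nat (Suc (Suc n))))"
        unfolding s_def by (intro nQ sh)
      also have "\<dots> \<le> B * (2 / real (Suc N))"
        using sle[OF m] sle[OF n] B0 by (intro mult_left_mono) auto
      also have "\<dots> < e"
      proof -
        have "2 * B < e * real (Suc N)" using N e by (simp add: divide_less_eq mult.commute)
        then show ?thesis by (simp add: divide_less_eq mult.commute)
      qed
      finally show "norm (s m - s n) < e" .
    qed
  qed
  then obtain L where sL: "s \<longlonglongrightarrow> L" using Cauchy_convergent_iff convergent_def by blast
  have QL: "norm (Q h - L) \<le> B * cmod h" if h: "0 < cmod h" "cmod h < 1" for h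
  proof -
    have t1: "(\<lambda>n. norm (Q h - s n)) \<longlonglongrightarrow> norm (Q h - L)"
      by (intro tendsto_intros sL)
    have "(\<lambda>n. 1 / real (Suc n)) \<longlonglongrightarrow> 0" by (rule LIMSEQ_inverse_real_of_nat[unfolded inverse_eq_divide])
    then have t2: "(\<lambda>n. B * (cmod h + 1 / real (Suc n))) \<longlonglongrightarrow> B * (cmod h + 0)"
      by (intro tendsto_intros)
    have "norm (Q h - L) \<le> B * (cmod h + 0)"
    proof (rule LIMSEQ_le[OF t1 t2], intro exI allI impI)
      fix n :: nat
      have "norm (Q h - s n) \<le> B * (cmod h + cmod (1 / complex_of_nat (Suc (Suc n))))"
        unfolding s_def by (intro nQ h sh)
      also have "\<dots> \<le> B * (cmod h + 1 / real (Suc n))"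
        using sle[of n n] B0 by (intro mult_left_mono) auto
      finally show "norm (Q h - s n) \<le> B * (cmod h + 1 / real (Suc n))" .
    qed
    then show ?thesis by simp
  qed
  have bl: "bounded_linear (\<lambda>h. h *\<^sub>C L)"
    by (rule bounded_bilinear.bounded_linear_left[OF bb_scaleC])
  show ?thesis
  proof (intro exI, subst has_derivative_at, intro conjI)
    show "bounded_linear (\<lambda>h. h *\<^sub>C L)" by (rule bl)
    show "(\<lambda>h. norm (g' (z0 + h) - g' z0 - h *\<^sub>C L) / norm h) \<midarrow>0\<rightarrow> 0"
    proof (rule Lim_null_comparison)
      show "((\<lambda>h. B * cmod h) \<longlongrightarrow> 0) (at 0)"
        by (auto intro!: tendsto_eq_intros)
      have "eventually (\<lambda>h. 0 < cmod h \<and> cmod h < 1) (at (0::complex))"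
        unfolding eventually_at by (intro exI[of _ 1]) (auto simp: dist_norm)
      then show "eventually (\<lambda>h. norm (norm (g' (z0 + h) - g' z0 - h *\<^sub>C L) / norm h) \<le> B * cmod h) (at 0)"
      proof (rule eventually_mono)
        fix h :: complex assume h: "0 < cmod h \<and> cmod h < 1"
        have "g' (z0 + h) - g' z0 = h *\<^sub>C Q h"
          using h by (simp add: Q_def scaleC_scaleC scaleC_one)
        then have "g' (z0 + h) - g' z0 - h *\<^sub>C L = h *\<^sub>C (Q h - L)"
          by (simp add: scaleC_diff_right)
        then have "norm (g' (z0 + h) - g' z0 - h *\<^sub>C L) / norm h = norm (Q h - L)"
          using h by (simp add: norm_scaleC)
        then show "norm (norm (g' (z0 + h) - g' z0 - h *\<^sub>C L) / norm h) \<le> B * cmod h"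
          using QL h by simp
      qed
    qed
  qed
qed




definition spanv :: "(nat \<Rightarrow> 'H::complex_inner) \<Rightarrow> nat \<Rightarrow> 'H set" where
  "spanv v m = {x. \<exists>c. x = (\<Sum>k<m. c k *\<^sub>C v k)}"

lemma spanv_zero: "0 \<in> spanv v m"
  unfolding spanv_def by (rule CollectI, rule exI[of _ "\<lambda>_. 0"]) simp

lemma spanv_add: "x \<in> spanv v m \<Longrightarrow> y \<in> spanv v m \<Longrightarrow> x + y \<in> spanv v m"
proof -
  assume "x \<in> spanv v m" "y \<in> spanv v m"
  then obtain c d where "x = (\<Sum>k<m. c k *\<^sub>C v k)" "y = (\<Sum>k<m. d k *\<^sub>C v k)"
    unfolding spanv_def by auto
  then have "x + y = (\<Sum>k<m. (c k + d k) *\<^sub>C v k)" by (simp add: scaleC_add_left sum.distrib)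
  then show ?thesis unfolding spanv_def by (intro CollectI exI[where x="\<lambda>k. c k + d k"])
qed

lemma spanv_scale: "x \<in> spanv v m \<Longrightarrow> a *\<^sub>C x \<in> spanv v m"
proof -
  assume "x \<in> spanv v m"
  then obtain c where "x = (\<Sum>k<m. c k *\<^sub>C v k)" unfolding spanv_def by auto
  then have "a *\<^sub>C x = (\<Sum>k<m. (a * c k) *\<^sub>C v k)" by (simp add: scaleC_sum_right scaleC_scaleC)
  then show ?thesis unfolding spanv_def by (intro CollectI exI[where x="\<lambda>k. a * c k"])
qed

lemma spanv_minus: "x \<in> spanv v m \<Longrightarrow> - x \<in> spanv v m"
  using spanv_scale[of x v m "-1"] by (simp add: scaleC_minus_left scaleC_one)

lemma spanv_diff: "x \<in> spanv v m \<Longrightarrow> y \<in> spanv v m \<Longrightarrow> x - y \<in> spanv v m"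
  using spanv_add spanv_minus by (metis diff_conv_add_uminus)

lemma spanv_sum: "(\<And>j. j \<in> A \<Longrightarrow> t j \<in> spanv v m) \<Longrightarrow> (\<Sum>j\<in>A. t j) \<in> spanv v m"
  by (induction A rule: infinite_finite_induct) (auto simp: spanv_zero spanv_add)

lemma spanv_gen: "k < m \<Longrightarrow> v k \<in> spanv v m"
  unfolding spanv_def
proof (intro CollectI exI[where x="\<lambda>j. if j = k then 1 else 0"])
  assume "k < m"
  have "(\<Sum>j<m. (if j = k then 1 else 0) *\<^sub>C v j) = (\<Sum>j<m. if j = k then v j else 0)"
    by (rule sum.cong) (auto simp: scaleC_one)
  also have "\<dots> = v k" using \<open>k < m\<close> by (simp add: sum.delta)
  finally show "v k = (\<Sum>j<m. (if j = k then 1 else 0) *\<^sub>C v j)" by simp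
qed

lemma spanv_mono: "x \<in> spanv v m \<Longrightarrow> m \<le> m' \<Longrightarrow> x \<in> spanv v m'"
proof -
  assume "x \<in> spanv v m" "m \<le> m'"
  then obtain c where c: "x = (\<Sum>k<m. c k *\<^sub>C v k)" unfolding spanv_def by auto
  have "x = (\<Sum>k<m. c k *\<^sub>C v k)" by (fact c)
  also have "\<dots> \<in> spanv v m'"
    by (intro spanv_sum spanv_scale spanv_gen) (use \<open>m \<le> m'\<close> in auto)
  finally show ?thesis .
qed

lemma spanv_subset: "(\<And>k. k < m \<Longrightarrow> v k \<in> spanv w m') \<Longrightarrow> x \<in> spanv v m \<Longrightarrow> x \<in> spanv w m'"
proof -
  assume h: "\<And>k. k < m \<Longrightarrow> v k \<in> spanv w m'" and "x \<in> spanv v m"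
  then obtain c where c: "x = (\<Sum>k<m. c k *\<^sub>C v k)" unfolding spanv_def by auto
  show ?thesis unfolding c by (intro spanv_sum spanv_scale h) auto
qed

lemma spanv_orth: "(\<And>j. j < m \<Longrightarrow> cinner y (v j) = 0) \<Longrightarrow> x \<in> spanv v m \<Longrightarrow> cinner y x = 0"
  unfolding spanv_def by (auto simp: cinner_sum_right cinner_scaleC_right)

lemma spanv_orth_left: "(\<And>j. j < m \<Longrightarrow> cinner (v j) y = 0) \<Longrightarrow> x \<in> spanv v m \<Longrightarrow> cinner x y = 0"
  by (metis spanv_orth cinner_conj_sym complex_cnj_zero)

lemma spanv_expand:
  assumes orth: "\<And>i j. i < m \<Longrightarrow> j < m \<Longrightarrow> cinner (v i) (v j) = (if i = j then 1 else 0)"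
    and x: "x \<in> spanv v m"
  shows "x = (\<Sum>j<m. cinner (v j) x *\<^sub>C v j)"
proof -
  obtain c where c: "x = (\<Sum>k<m. c k *\<^sub>C v k)" using x unfolding spanv_def by auto
  have "cinner (v j) x = c j" if "j < m" for j
  proof -
    have "cinner (v j) x = (\<Sum>k<m. c k * (if j = k then 1 else 0))"
      using that by (simp add: c cinner_sum_right cinner_scaleC_right orth)
    also have "\<dots> = (\<Sum>k<m. if k = j then c k else 0)" by (rule sum.cong) auto
    also have "\<dots> = c j" using that by (simp add: sum.delta)
    finally show ?thesis .
  qed
  then show ?thesis by (simp add: c)
qed

definition good :: "(complex \<Rightarrow> 'H::complex_inner) \<Rightarrow> nat \<Rightarrow> (complex \<Rightarrow> 'H) \<Rightarrow> bool" where
  "good f m x \<longleftrightarrow> (\<exists>c. (\<forall>k<m. \<forall>z. c k differentiable (at z)) \<and>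
      (\<forall>z. x z = (\<Sum>k<m. c k z *\<^sub>C dpow f k z)))"

definition Dzb :: "(complex \<Rightarrow> 'H::complex_inner) \<Rightarrow> complex \<Rightarrow> 'H" where
  "Dzb u z = (1/2) *\<^sub>C (dX u z + \<i> *\<^sub>C dY u z)"

lemma good_Sp: "good f m x \<Longrightarrow> x z \<in> spanv (\<lambda>k. dpow f k z) m"
  unfolding good_def spanv_def by auto

lemma good_F: "k < m \<Longrightarrow> good f m (dpow f k)"
  unfolding good_def
proof (intro exI[where x="\<lambda>j z. if j = k then 1 else 0"] conjI allI impI)
  assume "k < m"
  fix z
  have "(\<Sum>j<m. (if j = k then 1 else 0) *\<^sub>C dpow f j z) = (\<Sum>j<m. if j = k then dpow f j z else 0)"
    by (rule sum.cong) (auto simp: scaleC_one)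
  also have "\<dots> = dpow f k z" using \<open>k < m\<close> by (simp add: sum.delta)
  finally show "dpow f k z = (\<Sum>j<m. (if j = k then 1 else 0) *\<^sub>C dpow f j z)" by simp
qed auto

lemma good_zero: "good f m (\<lambda>z. 0)"
  unfolding good_def by (intro exI[where x="\<lambda>j z. 0"]) auto

lemma good_add: "good f m x \<Longrightarrow> good f m y \<Longrightarrow> good f m (\<lambda>z. x z + y z)"
  unfolding good_def
proof (elim exE conjE)
  fix c d assume c: "\<forall>k<m. \<forall>z. c k differentiable (at z)" "\<forall>z. x z = (\<Sum>k<m. c k z *\<^sub>C dpow f k z)"
    and d: "\<forall>k<m. \<forall>z. d k differentiable (at z)" "\<forall>z. y z = (\<Sum>k<m. d k z *\<^sub>C dpow f k z)"
  show "\<exists>e. (\<forall>k<m. \<forall>z. e k differentiable (at z)) \<and> (\<forall>z. x z + y z = (\<Sum>k<m. e k z *\<^sub>C dpow f k z))"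
    by (rule exI[where x="\<lambda>k z. c k z + d k z"])
       (use c d in \<open>auto simp: scaleC_add_left sum.distrib intro!: differentiable_add\<close>)
qed

lemma good_scale: "(\<And>z. a differentiable (at z)) \<Longrightarrow> good f m x \<Longrightarrow> good f m (\<lambda>z. a z *\<^sub>C x z)"
  unfolding good_def
proof (elim exE conjE)
  fix c assume a: "\<And>z. a differentiable (at z)" and c: "\<forall>k<m. \<forall>z. c k differentiable (at z)" "\<forall>z. x z = (\<Sum>k<m. c k z *\<^sub>C dpow f k z)"
  show "\<exists>e. (\<forall>k<m. \<forall>z. e k differentiable (at z)) \<and> (\<forall>z. a z *\<^sub>C x z = (\<Sum>k<m. e k z *\<^sub>C dpow f k z))"
    by (rule exI[where x="\<lambda>k z. a z * c k z"])
       (use a c in \<open>auto simp: scaleC_sum_right scaleC_scaleC intro!: differentiable_mult\<close>)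
qed

lemma good_diff: "good f m x \<Longrightarrow> good f m y \<Longrightarrow> good f m (\<lambda>z. x z - y z)"
proof -
  assume "good f m x" "good f m y"
  then have "good f m (\<lambda>z. x z + (\<lambda>z. - 1) z *\<^sub>C y z)"
    by (intro good_add good_scale) auto
  then show ?thesis by (simp add: scaleC_minus_left scaleC_one)
qed

lemma good_sum: "(\<And>j. j \<in> A \<Longrightarrow> good f m (t j)) \<Longrightarrow> good f m (\<lambda>z. \<Sum>j\<in>A. t j z)"
proof (induction A rule: infinite_finite_induct)
  case (insert x F) then show ?case
    using good_add[of f m "t x" "\<lambda>z. \<Sum>j\<in>F. t j z"] by simp
qed (auto simp: good_zero)

lemma good_mono: "good f m x \<Longrightarrow> m \<le> m' \<Longrightarrow> good f m' x"
proof -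
  assume "good f m x" "m \<le> m'"
  then obtain c where c: "\<forall>k<m. \<forall>z. c k differentiable (at z)" "\<forall>z. x z = (\<Sum>k<m. c k z *\<^sub>C dpow f k z)"
    unfolding good_def by auto
  have "good f m' (\<lambda>z. \<Sum>k<m. c k z *\<^sub>C dpow f k z)"
    by (intro good_sum good_scale good_F) (use c \<open>m \<le> m'\<close> in auto)
  moreover have "x = (\<lambda>z. \<Sum>k<m. c k z *\<^sub>C dpow f k z)" using c by auto
  ultimately show ?thesis by simp
qed

lemma term_cancel:
  fixes F F' :: "'H::complex_inner"
  shows "(c *\<^sub>C (1 *\<^sub>C F') + D 1 *\<^sub>C F) + \<i> *\<^sub>C (c *\<^sub>C (\<i> *\<^sub>C F') + D \<i> *\<^sub>C F)
     = (D 1 + \<i> * D \<i>) *\<^sub>C F"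
proof -
  have "(c *\<^sub>C (1 *\<^sub>C F') + D 1 *\<^sub>C F) + \<i> *\<^sub>C (c *\<^sub>C (\<i> *\<^sub>C F') + D \<i> *\<^sub>C F)
     = (c *\<^sub>C F' + (\<i> * (c * \<i>)) *\<^sub>C F') + (D 1 *\<^sub>C F + (\<i> * D \<i>) *\<^sub>C F)"
    by (simp add: scaleC_add_right scaleC_scaleC scaleC_one add_ac)
  also have "\<dots> = (c + \<i> * (c * \<i>)) *\<^sub>C F' + (D 1 + \<i> * D \<i>) *\<^sub>C F"
    by (simp add: scaleC_add_left)
  also have "c + \<i> * (c * \<i>) = 0"
  proof -
    have "\<i> * (c * \<i>) = c * (\<i> * \<i>)" by (simp only: ac_simps)
    then show ?thesis by simp
  qed
  finally show ?thesis by simp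
qed

lemma good_deriv:
  assumes hdF: "\<And>k z. (dpow f k has_derivative (\<lambda>h. h *\<^sub>C dpow f (Suc k) z)) (at z)"
    and g: "good f m x"
  shows "\<exists>D. (x has_derivative D) (at z) \<and> (\<forall>h. D h \<in> spanv (\<lambda>k. dpow f k z) (Suc m))
     \<and> D 1 + \<i> *\<^sub>C D \<i> \<in> spanv (\<lambda>k. dpow f k z) m"
proof -
  obtain c where c: "\<forall>k<m. \<forall>z. c k differentiable (at z)" "\<forall>z. x z = (\<Sum>k<m. c k z *\<^sub>C dpow f k z)"
    using g unfolding good_def by auto
  define Dc where "Dc k = (SOME D. (c k has_derivative D) (at z))" for k
  have Dc: "(c k has_derivative Dc k) (at z)" if "k < m" for k
    using c(1) that unfolding Dc_def differentiable_def by (metis someI_ex)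
  have xe: "x = (\<lambda>z. \<Sum>k<m. c k z *\<^sub>C dpow f k z)" using c by auto
  define D where "D h = (\<Sum>k<m. c k z *\<^sub>C (h *\<^sub>C dpow f (Suc k) z) + Dc k h *\<^sub>C dpow f k z)" for h
  have "(x has_derivative D) (at z)"
    unfolding xe D_def
    by (intro has_derivative_sum bounded_bilinear.FDERIV[OF bb_scaleC] Dc hdF) auto
  moreover have "D h \<in> spanv (\<lambda>k. dpow f k z) (Suc m)" for h
    unfolding D_def
    by (intro spanv_sum spanv_add spanv_scale spanv_gen) auto
  moreover have "D 1 + \<i> *\<^sub>C D \<i> = (\<Sum>k<m. (Dc k 1 + \<i> * Dc k \<i>) *\<^sub>C dpow f k z)"
    unfolding D_def scaleC_sum_right sum.distrib[symmetric]
    by (rule sum.cong[OF refl]) (rule term_cancel)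
  moreover have "(\<Sum>k<m. (Dc k 1 + \<i> * Dc k \<i>) *\<^sub>C dpow f k z) \<in> spanv (\<lambda>k. dpow f k z) m"
    by (intro spanv_sum spanv_scale spanv_gen) auto
  ultimately show ?thesis by metis
qed

lemma Dz_D: "(u has_derivative D) (at z) \<Longrightarrow> Dz u z = (1/2) *\<^sub>C (D 1 - \<i> *\<^sub>C D \<i>)"
  by (simp add: Dz_def hd_dXY)

lemma Dzb_D: "(u has_derivative D) (at z) \<Longrightarrow> Dzb u z = (1/2) *\<^sub>C (D 1 + \<i> *\<^sub>C D \<i>)"
  by (simp add: Dzb_def hd_dXY)

lemma good_props:
  assumes hdF: "\<And>k z. (dpow f k has_derivative (\<lambda>h. h *\<^sub>C dpow f (Suc k) z)) (at z)"
    and g: "good f m x"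
  shows "x differentiable (at z)" "Dz x z \<in> spanv (\<lambda>k. dpow f k z) (Suc m)"
    "Dzb x z \<in> spanv (\<lambda>k. dpow f k z) m"
proof -
  obtain D where D: "(x has_derivative D) (at z)" "\<forall>h. D h \<in> spanv (\<lambda>k. dpow f k z) (Suc m)"
     "D 1 + \<i> *\<^sub>C D \<i> \<in> spanv (\<lambda>k. dpow f k z) m"
    using good_deriv[OF hdF g] by blast
  show "x differentiable (at z)" using D(1) differentiable_def by blast
  show "Dz x z \<in> spanv (\<lambda>k. dpow f k z) (Suc m)"
    unfolding Dz_D[OF D(1)] using D(2) by (intro spanv_scale spanv_diff) auto
  show "Dzb x z \<in> spanv (\<lambda>k. dpow f k z) m"
    unfolding Dzb_D[OF D(1)] using D(3) by (intro spanv_scale)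
qed




lemma diff_cinner: "x differentiable (at z) \<Longrightarrow> y differentiable (at z) \<Longrightarrow>
   (\<lambda>z. cinner (x z) (y z)) differentiable (at z)"
  unfolding differentiable_def using bounded_bilinear.FDERIV[OF bb_cinner] by blast

lemma diff_invnorm:
  fixes w :: "complex \<Rightarrow> 'H::complex_inner"
  assumes w: "w differentiable (at z)" "w z \<noteq> 0"
  shows "(\<lambda>z. complex_of_real (1 / norm (w z))) differentiable (at z)"
proof -
  define r where "r z = Re (cinner (w z) (w z))" for z
  have r: "r differentiable (at z)"
  proof -
    have "(Re \<circ> (\<lambda>z. cinner (w z) (w z))) differentiable (at z)"
      by (rule differentiable_chain_at[OF diff_cinner[OF w(1) w(1)]])
         (rule bounded_linear_imp_differentiable[OF bounded_linear_Re])
    then show ?thesis by (simp add: r_def[abs_def] o_def)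
  qed
  have rz: "r z > 0" using w(2) by (simp add: r_def cinner_self)
  have "((\<lambda>t. 1 / sqrt t) has_real_derivative (- (inverse (sqrt (r z)) / 2) / (sqrt (r z))^2)) (at (r z))"
    using rz by (auto intro!: derivative_eq_intros simp: power2_eq_square)
  then have g1: "(\<lambda>t. 1 / sqrt t) differentiable (at (r z))"
    using real_differentiable_def differentiableI by blast
  have g: "((\<lambda>t. complex_of_real t) \<circ> (\<lambda>t. 1 / sqrt t)) differentiable (at (r z))"
    by (rule differentiable_chain_at[OF g1])
       (rule bounded_linear_imp_differentiable[OF bounded_linear_of_real])
  have "((((\<lambda>t. complex_of_real t) \<circ> (\<lambda>t. 1 / sqrt t))) \<circ> r) differentiable (at z)"
    by (rule differentiable_chain_at[OF r g])
  moreover have "(((\<lambda>t. complex_of_real t) \<circ> (\<lambda>t. 1 / sqrt t)) \<circ> r) = (\<lambda>z. complex_of_real (1 / norm (w z)))"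
    by (auto simp: r_def norm_eq_sqrt_cinner)
  ultimately show ?thesis by simp
qed

lemma indep_not_span:
  assumes "lin_indep_upto v n"
  shows "v n \<notin> spanv v n"
proof
  assume "v n \<in> spanv v n"
  then obtain c where c: "v n = (\<Sum>k<n. c k *\<^sub>C v k)" unfolding spanv_def by auto
  define c' where "c' k = (if k = n then -1 else c k)" for k
  have "(\<Sum>k\<le>n. c' k *\<^sub>C v k) = (\<Sum>k<n. c' k *\<^sub>C v k) + c' n *\<^sub>C v n"
    by (simp add: lessThan_Suc_atMost[symmetric])
  also have "(\<Sum>k<n. c' k *\<^sub>C v k) = (\<Sum>k<n. c k *\<^sub>C v k)"
    by (rule sum.cong) (auto simp: c'_def)
  also have "c' n *\<^sub>C v n = - v n" by (simp add: c'_def scaleC_minus_left scaleC_one)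
  finally have "(\<Sum>k\<le>n. c' k *\<^sub>C v k) = 0" using c by simp
  then have "c' n = 0" using assms unfolding lin_indep_upto_def by blast
  then show False by (simp add: c'_def)
qed

definition GS :: "(complex \<Rightarrow> 'H::complex_inner) \<Rightarrow> nat \<Rightarrow> bool" where
  "GS f n \<longleftrightarrow> good f (Suc n) (LL f n) \<and> (\<forall>z. cinner (LL f n z) (LL f n z) = 1
     \<and> (\<forall>j<n. cinner (LL f j z) (LL f n z) = 0)
     \<and> dpow f n z \<in> spanv (\<lambda>j. LL f j z) (Suc n)
     \<and> (\<forall>x\<in>spanv (\<lambda>k. dpow f k z) n. cinner (LL f n z) x = 0)
     \<and> cinner (LL f n z) (dpow f n z) \<noteq> 0)"

lemma GS_step:
  assumes hdF: "\<And>k z. (dpow f k has_derivative (\<lambda>h. h *\<^sub>C dpow f (Suc k) z)) (at z)"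
    and indep: "\<forall>z n. lin_indep_upto (\<lambda>k. dpow f k z) n"
    and IH: "\<And>j. j < n \<Longrightarrow> GS f j"
  shows "GS f n"
proof -
  have orth: "cinner (LL f i z) (LL f j z) = (if i = j then 1 else 0)" if "i < n" "j < n" for i j z
  proof (cases i j rule: linorder_cases)
    case less then show ?thesis using IH[OF that(2)] unfolding GS_def by auto
  next
    case equal then show ?thesis using IH[OF that(2)] unfolding GS_def by auto
  next
    case greater then show ?thesis using IH[OF that(1)] unfolding GS_def
      by (metis cinner_conj_sym complex_cnj_zero less_irrefl)
  qed
  have SU: "x \<in> spanv (\<lambda>j. LL f j z) n" if "x \<in> spanv (\<lambda>k. dpow f k z) n" for x z
  proof (rule spanv_subset[OF _ that])
    fix k assume "k < n"
    then show "dpow f k z \<in> spanv (\<lambda>j. LL f j z) n"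
      using IH[OF \<open>k < n\<close>] spanv_mono[of _ _ "Suc k" n] unfolding GS_def by auto
  qed
  have US: "x \<in> spanv (\<lambda>k. dpow f k z) n" if "x \<in> spanv (\<lambda>j. LL f j z) n" for x z
  proof (rule spanv_subset[OF _ that])
    fix k assume "k < n"
    then show "LL f k z \<in> spanv (\<lambda>j. dpow f j z) n"
      using IH[OF \<open>k < n\<close>] good_Sp[of f "Suc k" "LL f k"] spanv_mono[of _ _ "Suc k" n] unfolding GS_def by auto
  qed
  define p0 where "p0 z = (\<Sum>j<n. cinner (LL f j z) (dpow f n z) *\<^sub>C LL f j z)" for z
  define w where "w z = dpow f n z - p0 z" for z
  have p0U: "p0 z \<in> spanv (\<lambda>j. LL f j z) n" for z
    unfolding p0_def by (intro spanv_sum spanv_scale spanv_gen) auto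
  have wo: "cinner (LL f j z) (w z) = 0" if "j < n" for j z
  proof -
    have "cinner (LL f j z) (p0 z) = (\<Sum>i<n. if i = j then cinner (LL f i z) (dpow f n z) else 0)"
      unfolding p0_def cinner_sum_right cinner_scaleC_right
      by (rule sum.cong) (use that in \<open>auto simp: orth\<close>)
    also have "\<dots> = cinner (LL f j z) (dpow f n z)" using that by (simp add: sum.delta)
    finally show ?thesis by (simp add: w_def cinner_diff_right)
  qed
  have Pn: "Pn f n z (dpow f n z) = p0 z" for z
    unfolding Pn_def
  proof (rule the_equality)
    have "p0 z \<in> spanv (\<lambda>k. dpow f k z) n" by (rule US[OF p0U])
    then show "(\<exists>c. p0 z = (\<Sum>k<n. c k *\<^sub>C dpow f k z)) \<and> (\<forall>k<n. cinner (dpow f k z) (dpow f n z - p0 z) = 0)"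
    proof (intro conjI allI impI)
      fix k assume "k < n"
      have "dpow f k z \<in> spanv (\<lambda>j. LL f j z) n" by (rule SU, rule spanv_gen[OF \<open>k < n\<close>])
      then show "cinner (dpow f k z) (dpow f n z - p0 z) = 0"
        unfolding w_def[symmetric] by (rule spanv_orth_left[rotated]) (rule wo)
    qed (auto simp: spanv_def)
  next
    fix p assume p: "(\<exists>c. p = (\<Sum>k<n. c k *\<^sub>C dpow f k z)) \<and> (\<forall>k<n. cinner (dpow f k z) (dpow f n z - p) = 0)"
    define d where "d = p0 z - p"
    have pS: "p \<in> spanv (\<lambda>k. dpow f k z) n" using p by (auto simp: spanv_def)
    have dS: "d \<in> spanv (\<lambda>k. dpow f k z) n" unfolding d_def by (rule spanv_diff[OF US[OF p0U] pS])
    have "cinner (dpow f k z) d = 0" if "k < n" for k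
    proof -
      have "dpow f k z \<in> spanv (\<lambda>j. LL f j z) n" by (rule SU, rule spanv_gen[OF that])
      then have "cinner (dpow f k z) (w z) = 0" by (rule spanv_orth_left[rotated]) (rule wo)
      moreover have "d = (dpow f n z - p) - w z" by (simp add: d_def w_def)
      ultimately show ?thesis using p that by (simp add: cinner_diff_right)
    qed
    then have "cinner d d = 0" by (rule spanv_orth_left[OF _ dS])
    then show "p = p0 z" by (simp add: cinner_eq_zero_iff d_def)
  qed
  have wnz: "w z \<noteq> 0" for z
  proof
    assume "w z = 0"
    then have "dpow f n z = p0 z" by (simp add: w_def)
    then have "dpow f n z \<in> spanv (\<lambda>k. dpow f k z) n" using US[OF p0U] by simp
    then show False using indep_not_span indep by blast
  qed
  have LLeq: "LL f n z = complex_of_real (1 / norm (w z)) *\<^sub>C w z" for z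
    by (simp add: LL_def Let_def Pn w_def)
  have nw: "norm (w z) > 0" for z using wnz by simp
  have Fn: "dpow f n z = p0 z + complex_of_real (norm (w z)) *\<^sub>C LL f n z" for z
    using nw[of z] by (simp add: LLeq scaleC_scaleC scaleC_one w_def)
  have good_w: "good f (Suc n) w"
  proof -
    have "good f (Suc n) (\<lambda>z. dpow f n z - (\<Sum>j<n. cinner (LL f j z) (dpow f n z) *\<^sub>C LL f j z))"
    proof (intro good_diff good_F good_sum good_scale)
      fix j z assume j: "j \<in> {..<n}"
      have "good f (Suc j) (LL f j)" using IH[of j] j by (auto simp: GS_def)
      then show "good f (Suc n) (LL f j)" by (rule good_mono) (use j in auto)
      show "(\<lambda>z. cinner (LL f j z) (dpow f n z)) differentiable (at z)"
        by (rule diff_cinner[OF good_props(1)[OF hdF \<open>good f (Suc j) (LL f j)\<close>]])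
           (use hdF differentiable_def in blast)
    qed auto
    then show ?thesis by (simp add: w_def[abs_def] p0_def)
  qed
  have good_LL: "good f (Suc n) (LL f n)"
  proof -
    have "good f (Suc n) (\<lambda>z. complex_of_real (1 / norm (w z)) *\<^sub>C w z)"
      by (intro good_scale good_w diff_invnorm good_props(1)[OF hdF good_w] wnz)
    then show ?thesis by (simp add: LLeq[abs_def])
  qed
  have uu: "cinner (LL f n z) (LL f n z) = 1" for z
    using nw[of z] by (simp only: LLeq cinner_scaleC_left cinner_scaleC_right) (simp add: cinner_self power2_eq_square)
  show ?thesis unfolding GS_def
  proof (intro conjI allI impI ballI good_LL)
    fix z
    show "cinner (LL f n z) (LL f n z) = 1" by (rule uu)
    show "cinner (LL f j z) (LL f n z) = 0" if "j < n" for j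
      using wo[OF that] by (simp add: LLeq cinner_simps)
    show "dpow f n z \<in> spanv (\<lambda>j. LL f j z) (Suc n)"
      unfolding Fn by (intro spanv_add spanv_scale spanv_gen spanv_mono[OF p0U]) auto
    have uw: "cinner (LL f n z) (LL f j z) = 0" if "j < n" for j
      using wo[OF that] by (simp add: LLeq cinner_simps) (metis cinner_conj_sym complex_cnj_zero)
    show "cinner (LL f n z) x = 0" if "x \<in> spanv (\<lambda>k. dpow f k z) n" for x
      by (rule spanv_orth[OF uw SU[OF that]])
    have "cinner (LL f n z) (p0 z) = 0" by (rule spanv_orth[OF uw p0U])
    then have "cinner (LL f n z) (dpow f n z) = complex_of_real (norm (w z))"
      by (subst Fn) (simp only: cinner_add_right cinner_scaleC_right uu, simp)
    then show "cinner (LL f n z) (dpow f n z) \<noteq> 0" using nw[of z] by simp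
  qed
qed

lemma GS_all:
  assumes hdF: "\<And>k z. (dpow f k has_derivative (\<lambda>h. h *\<^sub>C dpow f (Suc k) z)) (at z)"
    and indep: "\<forall>z n. lin_indep_upto (\<lambda>k. dpow f k z) n"
  shows "GS f n"
proof (induction n rule: less_induct)
  case (less n) then show ?case using GS_step[OF hdF indep] by blast
qed




lemma hdF_all:
  fixes f :: "complex \<Rightarrow> 'H::{complex_inner,complete_space}"
  assumes "hol f"
  shows "(dpow f k has_derivative (\<lambda>h. h *\<^sub>C dpow f (Suc k) z)) (at z)"
proof (induction k arbitrary: z)
  case 0
  obtain d where d: "(f has_derivative (\<lambda>h. h *\<^sub>C d)) (at z)" using assms unfolding hol_def by blast
  then have "Dz f z = d" by (rule Dz_hol)
  then show ?case using d by simp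
next
  case (Suc k)
  obtain L where L: "(dpow f (Suc k) has_derivative (\<lambda>h. h *\<^sub>C L)) (at z)"
    using holo_deriv[OF Suc.IH] by blast
  then have "Dz (dpow f (Suc k)) z = L" by (rule Dz_hol)
  then show ?case using L by simp
qed

lemma cinner_const_deriv:
  assumes x: "(x has_derivative Dx) (at z)" and y: "(y has_derivative Dy) (at z)"
    and c: "\<And>z'. cinner (x z') (y z') = c"
  shows "cinner (Dx h) (y z) + cinner (x z) (Dy h) = 0"
proof -
  have "((\<lambda>z. cinner (x z) (y z)) has_derivative (\<lambda>h. cinner (x z) (Dy h) + cinner (Dx h) (y z))) (at z)"
    by (rule bounded_bilinear.FDERIV[OF bb_cinner x y])
  moreover have "((\<lambda>z. cinner (x z) (y z)) has_derivative (\<lambda>h. 0)) (at z)"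
    using c by simp
  ultimately have "(\<lambda>h. cinner (x z) (Dy h) + cinner (Dx h) (y z)) = (\<lambda>h. 0)"
    by (rule has_derivative_unique)
  then show ?thesis by (metis add.commute)
qed

lemma swap_D:
  assumes x: "(x has_derivative Dx) (at z)" and y: "(y has_derivative Dy) (at z)"
    and c: "\<And>z'. cinner (x z') (y z') = c"
  shows "cinner (x z) (Dz y z) = - cinner (Dzb x z) (y z)"
    "cinner (x z) (Dzb y z) = - cinner (Dz x z) (y z)"
proof -
  have e1: "cinner (x z) (Dy 1) = - cinner (Dx 1) (y z)"
    using cinner_const_deriv[OF x y c, of 1] by (simp add: add_eq_0_iff)
  have ei: "cinner (x z) (Dy \<i>) = - cinner (Dx \<i>) (y z)"
    using cinner_const_deriv[OF x y c, of \<i>] by (simp add: add_eq_0_iff)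
  show "cinner (x z) (Dz y z) = - cinner (Dzb x z) (y z)"
    unfolding Dz_D[OF y] Dzb_D[OF x]
    by (simp only: cinner_simps e1 ei) (simp add: algebra_simps)
  show "cinner (x z) (Dzb y z) = - cinner (Dz x z) (y z)"
    unfolding Dzb_D[OF y] Dz_D[OF x]
    by (simp only: cinner_simps e1 ei) (simp add: algebra_simps)
qed

lemma twice_C: "X + X = (2::complex) *\<^sub>C (X::'H::complex_vector)"
proof -
  have "(1 + 1) *\<^sub>C X = X + X" by (simp only: scaleC_add_left scaleC_one)
  then show ?thesis by (simp only: one_add_one)
qed

lemma dXY_split:
  fixes u :: "complex \<Rightarrow> 'H::complex_inner"
  shows "dX u z = Dz u z + Dzb u z" "dY u z = \<i> *\<^sub>C (Dz u z - Dzb u z)"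
proof -
  define X where "X = dX u z"
  define W where "W = \<i> *\<^sub>C dY u z"
  have "Dz u z + Dzb u z = (1/2) *\<^sub>C ((X - W) + (X + W))"
    by (simp only: Dz_def Dzb_def scaleC_add_right X_def W_def)
  also have "(X - W) + (X + W) = X + X" by (simp add: algebra_simps)
  also have "\<dots> = 2 *\<^sub>C X" by (rule twice_C)
  also have "(1/2) *\<^sub>C (2 *\<^sub>C X) = X" by (simp add: scaleC_scaleC scaleC_one)
  finally show "dX u z = Dz u z + Dzb u z" by (simp add: X_def)
  have "Dz u z - Dzb u z = (1/2) *\<^sub>C ((X - W) - (X + W))"
    by (simp only: Dz_def Dzb_def scaleC_diff_right X_def W_def)
  also have "(X - W) - (X + W) = - (W + W)" by (simp add: algebra_simps)
  also have "\<dots> = - (2 *\<^sub>C W)" by (simp only: twice_C)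
  also have "(1/2) *\<^sub>C (- (2 *\<^sub>C W)) = - W" by (simp add: scaleC_minus_right scaleC_scaleC scaleC_one)
  finally have "\<i> *\<^sub>C (Dz u z - Dzb u z) = \<i> *\<^sub>C (- W)" by simp
  also have "\<dots> = dY u z" by (simp add: W_def scaleC_minus_right scaleC_scaleC scaleC_minus_left scaleC_one)
  finally show "dY u z = \<i> *\<^sub>C (Dz u z - Dzb u z)" by simp
qed

lemma chi_alg:
  fixes e0 e1 e2 a b :: "'H::complex_inner"
  assumes o: "cinner e0 e0 = 1" "cinner e1 e1 = 1" "cinner e2 e2 = 1"
    "cinner e0 e1 = 0" "cinner e0 e2 = 0" "cinner e1 e2 = 0"
    and a: "a = p *\<^sub>C e0 + \<alpha> *\<^sub>C e1" and b: "b = q *\<^sub>C e0 + \<beta> *\<^sub>C e2"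
  shows "cinner (a + b) (\<i> *\<^sub>C (a - b) - cinner e0 (\<i> *\<^sub>C (a - b)) *\<^sub>C e0) = \<i> * (\<alpha> * cnj \<alpha> - \<beta> * cnj \<beta>)"
    "cinner (a + b) ((a + b) - cinner e0 (a + b) *\<^sub>C e0) = \<alpha> * cnj \<alpha> + \<beta> * cnj \<beta>"
    "cinner (\<i> *\<^sub>C (a - b)) (\<i> *\<^sub>C (a - b) - cinner e0 (\<i> *\<^sub>C (a - b)) *\<^sub>C e0) = \<alpha> * cnj \<alpha> + \<beta> * cnj \<beta>"
proof -
  have o': "cinner e1 e0 = 0" "cinner e2 e0 = 0" "cinner e2 e1 = 0"
    using o by (metis cinner_conj_sym complex_cnj_zero)+
  show "cinner (a + b) (\<i> *\<^sub>C (a - b) - cinner e0 (\<i> *\<^sub>C (a - b)) *\<^sub>C e0) = \<i> * (\<alpha> * cnj \<alpha> - \<beta> * cnj \<beta>)"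
    unfolding a b by (simp only: cinner_simps o o') (simp add: algebra_simps)
  show "cinner (a + b) ((a + b) - cinner e0 (a + b) *\<^sub>C e0) = \<alpha> * cnj \<alpha> + \<beta> * cnj \<beta>"
    unfolding a b by (simp only: cinner_simps o o') (simp add: algebra_simps)
  show "cinner (\<i> *\<^sub>C (a - b)) (\<i> *\<^sub>C (a - b) - cinner e0 (\<i> *\<^sub>C (a - b)) *\<^sub>C e0) = \<alpha> * cnj \<alpha> + \<beta> * cnj \<beta>"
    unfolding a b by (simp only: cinner_simps o o') (simp add: algebra_simps)
qed




lemma sqnorm_c: "z * cnj z = complex_of_real ((cmod z)^2)"
  by (metis complex_norm_square of_real_power)

lemma main_step:
  fixes f :: "complex \<Rightarrow> 'H::{complex_inner, complete_space}"
  assumes hdF: "\<And>k z. (dpow f k has_derivative (\<lambda>h. h *\<^sub>C dpow f (Suc k) z)) (at z)"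
    and G: "\<And>j. GS f j"
  shows "Omega (LL f n) z = 2 * (hN f (Suc n) z - hN f n z)
               \<and> trg (LL f n) z = 2 * (hN f (Suc n) z + hN f n z)"
proof -
  have gd: "good f (Suc j) (LL f j)" for j using G[of j] unfolding GS_def by blast
  have hasD: "\<exists>D. (LL f j has_derivative D) (at z')" for j z'
    using good_props(1)[OF hdF gd[of j]] differentiable_def by blast
  have orthall: "cinner (LL f i z') (LL f j z') = (if i = j then 1 else 0)" for i j z'
  proof (cases i j rule: linorder_cases)
    case less then show ?thesis using G[of j] unfolding GS_def by auto
  next
    case equal then show ?thesis using G[of j] unfolding GS_def by auto
  next
    case greater then show ?thesis using G[of i] unfolding GS_def
      by (metis cinner_conj_sym complex_cnj_zero less_irrefl)
  qed
  have SU: "x \<in> spanv (\<lambda>j. LL f j z) m" if "x \<in> spanv (\<lambda>k. dpow f k z) m" for x m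
  proof (rule spanv_subset[OF _ that])
    fix k assume "k < m"
    then show "dpow f k z \<in> spanv (\<lambda>j. LL f j z) m"
      using G[of k] spanv_mono[of _ _ "Suc k" m] unfolding GS_def by auto
  qed
  have Sorth: "cinner (LL f j z) x = 0" if "x \<in> spanv (\<lambda>k. dpow f k z) j" for j x
    using G[of j] that unfolding GS_def by blast
  have swap1: "cinner (LL f i z) (Dz (LL f j) z) = - cinner (Dzb (LL f i) z) (LL f j z)" for i j
  proof -
    obtain Di Dj where "(LL f i has_derivative Di) (at z)" "(LL f j has_derivative Dj) (at z)"
      using hasD by blast
    then show ?thesis using swap_D(1) orthall by blast
  qed
  have swap2: "cinner (LL f i z) (Dzb (LL f j) z) = - cinner (Dz (LL f i) z) (LL f j z)" for i j
  proof -
    obtain Di Dj where "(LL f i has_derivative Di) (at z)" "(LL f j has_derivative Dj) (at z)"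
      using hasD by blast
    then show ?thesis using swap_D(2) orthall by blast
  qed
  have orthm: "cinner (LL f i z) (LL f j z) = (if i = j then 1 else 0)" if "i < m" "j < m" for i j m
    using orthall by blast
  define a where "a = Dz (LL f n) z"
  define b where "b = Dzb (LL f n) z"
  have aS: "a \<in> spanv (\<lambda>j. LL f j z) (Suc (Suc n))"
    unfolding a_def by (rule SU, rule good_props(2)[OF hdF gd])
  have bS: "b \<in> spanv (\<lambda>j. LL f j z) (Suc n)"
    unfolding b_def by (rule SU, rule good_props(3)[OF hdF gd])
  have a0: "cinner (LL f j z) a = 0" if "j < n" for j
  proof -
    have "Dzb (LL f j) z \<in> spanv (\<lambda>k. dpow f k z) n"
      using spanv_mono[OF good_props(3)[OF hdF gd[of j]], of n] that by simp
    then have "cinner (LL f n z) (Dzb (LL f j) z) = 0" by (rule Sorth)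
    then have "cinner (Dzb (LL f j) z) (LL f n z) = 0" by (metis cinner_conj_sym complex_cnj_zero)
    then show ?thesis unfolding a_def swap1 by simp
  qed
  have b0: "cinner (LL f j z) b = 0" if "Suc j < n" for j
  proof -
    have "Dz (LL f j) z \<in> spanv (\<lambda>k. dpow f k z) n"
      using spanv_mono[OF good_props(2)[OF hdF gd[of j]], of n] that by simp
    then have "cinner (LL f n z) (Dz (LL f j) z) = 0" by (rule Sorth)
    then have "cinner (Dz (LL f j) z) (LL f n z) = 0" by (metis cinner_conj_sym complex_cnj_zero)
    then show ?thesis unfolding b_def swap2 by simp
  qed
  define p where "p = cinner (LL f n z) a"
  define \<alpha> where "\<alpha> = cinner (LL f (Suc n) z) a"
  define q where "q = cinner (LL f n z) b"
  have aE: "a = p *\<^sub>C LL f n z + \<alpha> *\<^sub>C LL f (Suc n) z"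
  proof -
    have "a = (\<Sum>j<Suc (Suc n). cinner (LL f j z) a *\<^sub>C LL f j z)"
      by (rule spanv_expand[OF _ aS]) (simp add: orthall)
    also have "\<dots> = (\<Sum>j<n. cinner (LL f j z) a *\<^sub>C LL f j z) + p *\<^sub>C LL f n z + \<alpha> *\<^sub>C LL f (Suc n) z"
      by (simp add: p_def \<alpha>_def)
    also have "(\<Sum>j<n. cinner (LL f j z) a *\<^sub>C LL f j z) = 0"
      by (rule sum.neutral) (simp add: a0)
    finally show ?thesis by simp
  qed
  have bEx: "b = (\<Sum>j<Suc n. cinner (LL f j z) b *\<^sub>C LL f j z)"
    by (rule spanv_expand[OF _ bS]) (simp add: orthall)
  obtain \<beta> e2 where bE: "b = q *\<^sub>C LL f n z + \<beta> *\<^sub>C e2"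
    and e2: "cinner e2 e2 = 1" "cinner (LL f n z) e2 = 0" "cinner (LL f (Suc n) z) e2 = 0"
    and hn: "hN f n z = (cmod \<beta>)^2"
  proof (cases n)
    case 0
    have "b = (\<Sum>j<Suc 0. cinner (LL f j z) b *\<^sub>C LL f j z)"
      using bEx 0 by simp
    then have "b = q *\<^sub>C LL f n z + 0 *\<^sub>C LL f 2 z" by (simp add: q_def 0)
    moreover have "hN f n z = (cmod 0)^2" by (simp add: hN_def 0)
    ultimately show ?thesis using that[of 0 "LL f 2 z"] orthall 0 by simp
  next
    case (Suc m)
    define \<beta> where "\<beta> = cinner (LL f m z) b"
    have "b = (\<Sum>j<Suc (Suc m). cinner (LL f j z) b *\<^sub>C LL f j z)"
      using bEx Suc by simp
    also have "\<dots> = (\<Sum>j<m. cinner (LL f j z) b *\<^sub>C LL f j z) + \<beta> *\<^sub>C LL f m z + q *\<^sub>C LL f n z"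
      by (simp add: q_def \<beta>_def Suc)
    also have "(\<Sum>j<m. cinner (LL f j z) b *\<^sub>C LL f j z) = 0"
      by (rule sum.neutral) (simp add: b0 Suc)
    finally have "b = q *\<^sub>C LL f n z + \<beta> *\<^sub>C LL f m z" by (simp add: add.commute)
    moreover have "hN f n z = (cmod \<beta>)^2"
    proof -
      have "\<beta> = - cinner (Dz (LL f m) z) (LL f n z)" unfolding \<beta>_def b_def by (rule swap2)
      also have "\<dots> = - cnj (cinner (LL f n z) (Dz (LL f m) z))" by (metis cinner_conj_sym)
      finally have "cmod \<beta> = cmod (cinner (LL f n z) (Dz (LL f m) z))" by simp
      then show ?thesis by (simp add: hN_def Suc)
    qed
    ultimately show ?thesis using that[of \<beta> "LL f m z"] orthall Suc by simp
  qed
  have o: "cinner (LL f n z) (LL f n z) = 1" "cinner (LL f (Suc n) z) (LL f (Suc n) z) = 1"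
    "cinner (LL f n z) (LL f (Suc n) z) = 0" using orthall by auto
  note ch = chi_alg[OF o(1) o(2) e2(1) o(3) e2(2) e2(3) aE bE]
  have hs: "hN f (Suc n) z = (cmod \<alpha>)^2" by (simp add: hN_def \<alpha>_def a_def)
  have dX: "dX (LL f n) z = a + b" and dY: "dY (LL f n) z = \<i> *\<^sub>C (a - b)"
    unfolding a_def b_def by (rule dXY_split)+
  have c1: "chi dX dY (LL f n) z = \<i> * complex_of_real ((cmod \<alpha>)^2 - (cmod \<beta>)^2)"
    unfolding chi_def dX dY ch(1) by (simp add: sqnorm_c)
  have c2: "chi dX dX (LL f n) z = complex_of_real ((cmod \<alpha>)^2 + (cmod \<beta>)^2)"
    unfolding chi_def dX ch(2) by (simp add: sqnorm_c)
  have c3: "chi dY dY (LL f n) z = complex_of_real ((cmod \<alpha>)^2 + (cmod \<beta>)^2)"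
    unfolding chi_def dY ch(3) by (simp add: sqnorm_c)
  show ?thesis
    unfolding Omega_def trg_def c1 c2 c3 hs hn by simp
qed




theorem mainTheorem6:
  fixes f :: "complex \<Rightarrow> 'H::{complex_inner, complete_space}"
    and L :: "complex set"
  assumes separable: "\<exists>D::'H set. countable D \<and> closure D = UNIV"
    and lattice: "is_lattice L"
    and holo: "hol f"
    and indep: "\<forall>z n. lin_indep_upto (\<lambda>k. dpow f k z) n"
    and quasi_periodic: "\<forall>l\<in>L. \<exists>c V. c holomorphic_on UNIV \<and> (\<forall>z. c z \<noteq> 0) \<and> unitary_op V
                                \<and> (\<forall>z. f (z + l) = c z *\<^sub>C V (f z))"
  shows "(\<forall>n z. Omega (LL f n) z = 2 * (hN f (Suc n) z - hN f n z)
               \<and> trg (LL f n) z = 2 * (hN f (Suc n) z + hN f n z))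
         \<and> (\<forall>z. Omega (LL f 0) z = 2 * hN f 1 z \<and> trg (LL f 0) z = 2 * hN f 1 z
               \<and> hN f 1 z > 0)"
proof -
  have hdF: "\<And>k z. (dpow f k has_derivative (\<lambda>h. h *\<^sub>C dpow f (Suc k) z)) (at z)"
    using hdF_all[OF holo] .
  have G: "\<And>j. GS f j" using GS_all[OF hdF indep] .
  have part1: "\<forall>n z. Omega (LL f n) z = 2 * (hN f (Suc n) z - hN f n z)
               \<and> trg (LL f n) z = 2 * (hN f (Suc n) z + hN f n z)"
    using main_step[OF hdF G] by blast
  have h1: "hN f 1 z > 0" for z
  proof -
    have Pn0: "Pn f 0 z' v = 0" for z' v by (simp add: Pn_def)
    define s where "s z' = complex_of_real (1 / norm (f z'))" for z'
    have L0: "LL f 0 = (\<lambda>z'. s z' *\<^sub>C f z')" by (simp add: fun_eq_iff LL_def Let_def Pn0 s_def)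
    have "cinner (LL f 0 z) (dpow f 0 z) \<noteq> 0" using G[of 0] unfolding GS_def by blast
    then have fz: "f z \<noteq> 0" by auto
    have fd: "(f has_derivative (\<lambda>h. h *\<^sub>C dpow f 1 z)) (at z)" using hdF[of 0 z] by simp
    have "s differentiable (at z)" unfolding s_def
      by (rule diff_invnorm[where w=f, OF _ fz]) (use fd differentiable_def in blast)
    then obtain Ds where Ds: "(s has_derivative Ds) (at z)" unfolding differentiable_def by blast
    have D: "(LL f 0 has_derivative (\<lambda>h. s z *\<^sub>C (h *\<^sub>C dpow f 1 z) + Ds h *\<^sub>C f z)) (at z)"
      unfolding L0 by (rule bounded_bilinear.FDERIV[OF bb_scaleC Ds fd])
    have o1: "cinner (LL f 1 z) (f z) = 0"
    proof -
      have "dpow f 0 z \<in> spanv (\<lambda>k. dpow f k z) 1" by (rule spanv_gen) simp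
      then show ?thesis using G[of 1] unfolding GS_def by auto
    qed
    define c1 where "c1 = cinner (LL f 1 z) (dpow f 1 z)"
    have c1: "c1 \<noteq> 0" using G[of 1] unfolding GS_def c1_def by auto
    have "cinner (LL f 1 z) (Dz (LL f 0) z) = (1/2) * (s z * c1 - \<i> * (s z * (\<i> * c1)))"
      unfolding Dz_D[OF D] by (simp only: cinner_simps o1 c1_def[symmetric]) simp
    also have "\<dots> = s z * c1" by (simp add: algebra_simps)
    finally have e: "cinner (LL f 1 z) (Dz (LL f 0) z) = s z * c1" .
    have "s z \<noteq> 0" using fz by (simp add: s_def)
    then have "hN f 1 z = (cmod (s z * c1))^2" using e by (simp add: hN_def)
    then show ?thesis using c1 \<open>s z \<noteq> 0\<close> by simp
  qed
  have rest: "\<forall>z. Omega (LL f 0) z = 2 * hN f 1 z \<and> trg (LL f 0) z = 2 * hN f 1 z \<and> hN f 1 z > 0"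
  proof (intro allI conjI)
    fix z
    have "hN f 0 z = 0" by (simp add: hN_def)
    then show "Omega (LL f 0) z = 2 * hN f 1 z" "trg (LL f 0) z = 2 * hN f 1 z"
      using part1[rule_format, of 0 z] by auto
    show "hN f 1 z > 0" by (rule h1)
  qed
  show ?thesis using part1 rest by blast
qed



end
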